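(* Let $K\ge1$, $\Delta_0,B>0$, and for $k=1,\dots,K$ let $m_k\ge0$, $v_k\ge0$. Let $\mathcal{G}\subset\mathbb{R}^K$ be the set of $\mathbf{r}$ for which there exist $\mathbf{p},\mathbf{y}\in\mathbb{R}^K$ and a $2K\times2K$ real matrix $\mathbf{H}=\begin{bmatrix}\mathbf{H}^{xx}&\mathbf{H}^{x\phi}\\(\mathbf{H}^{x\phi})^{\rm T}&\mathbf{H}^{\phi\phi}\end{bmatrix}$ (with $K\times K$ blocks) satisfying, for every $k$: $r_k\ge0$; $r_k\le\Delta_0B\,p_k\log_2(1+y_k/p_k)$; $0\le p_k\le1$; $\sum_kp_k\le1$; $H^{x\phi}_{k,k}=y_k-p_km_k$; $H^{\phi\phi}_{k,k}=v_k$ and $H^{\phi\phi}_{i,j}=0$ for $i\neq j$; $H^{xx}_{k,k}\le p_k-p_k^2$; $\sum_{i,j}H^{xx}_{i,j}\le\sum_ip_i-(\sum_ip_i)^2$; $\mathbf{H}\succeq0$. Then $\mathcal{G}$ is bounded.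
   Context: $\mathbf{H}\succeq0$ means $\mathbf{H}$ is positive semidefinite. In the rate constraint the function $p\log_2(1+y/p)$ is understood as its perspective (value $0$ at $p=0$). *)

theory Defs
  imports "HOL-Analysis.Analysis"
begin

definition psd :: "('i::finite \<Rightarrow> 'i \<Rightarrow> real) \<Rightarrow> bool" where
  "psd M \<longleftrightarrow> (\<forall>i j. M i j = M j i) \<and>
     (\<forall>x :: 'i \<Rightarrow> real. 0 \<le> (\<Sum>i\<in>UNIV. \<Sum>j\<in>UNIV. x i * M i j * x j))"

text \<open>The rate constraint r \<le> c * p * log2(1 + y/p), with the left-hand side understood
  as the perspective function: value 0 at p = 0; for p > 0 the logarithm must be
  defined, i.e. 1 + y/p > 0.\<close>
definition rate_ok :: "real \<Rightarrow> real \<Rightarrow> real \<Rightarrow> real \<Rightarrow> bool" where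
  "rate_ok c r p y \<longleftrightarrow>
     (if p = 0 then r \<le> 0
      else 0 < 1 + y / p \<and> r \<le> c * (p * log 2 (1 + y / p)))"

definition region_G ::
  "real \<Rightarrow> real \<Rightarrow> real ^ 'k::finite \<Rightarrow> real ^ 'k \<Rightarrow> (real ^ 'k) set" where
  "region_G \<Delta>0 B m v = {r. \<exists>(p :: real ^ 'k) (y :: real ^ 'k)
        (H :: ('k + 'k) \<Rightarrow> ('k + 'k) \<Rightarrow> real).
     (\<forall>k. 0 \<le> r $ k) \<and>
     (\<forall>k. rate_ok (\<Delta>0 * B) (r $ k) (p $ k) (y $ k)) \<and>
     (\<forall>k. 0 \<le> p $ k \<and> p $ k \<le> 1) \<and>
     (\<Sum>k\<in>UNIV. p $ k) \<le> 1 \<and>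
     (\<forall>i j. H (Inr i) (Inl j) = H (Inl j) (Inr i)) \<and>
     (\<forall>k. H (Inl k) (Inr k) = y $ k - p $ k * m $ k) \<and>
     (\<forall>k. H (Inr k) (Inr k) = v $ k) \<and>
     (\<forall>i j. i \<noteq> j \<longrightarrow> H (Inr i) (Inr j) = 0) \<and>
     (\<forall>k. H (Inl k) (Inl k) \<le> p $ k - (p $ k)\<^sup>2) \<and>
     (\<Sum>i\<in>UNIV. \<Sum>j\<in>UNIV. H (Inl i) (Inl j))
        \<le> (\<Sum>i\<in>UNIV. p $ i) - (\<Sum>i\<in>UNIV. p $ i)\<^sup>2 \<and>
     psd H}"

end

theory Submission
  imports Defs
begin

lemma psd_pair:
  fixes M :: "('i::finite) \<Rightarrow> 'i \<Rightarrow> real"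
  assumes "psd M" "a \<noteq> b"
  shows "2 * M a b \<le> M a a + M b b"
proof -
  define x :: "'i \<Rightarrow> real" where "x = (\<lambda>i. (if i = a then 1 else 0) - (if i = b then 1 else 0))"
  have q: "0 \<le> (\<Sum>i\<in>UNIV. \<Sum>j\<in>UNIV. x i * M i j * x j)" using assms(1) unfolding psd_def by blast
  have sym: "M b a = M a b" using assms(1) unfolding psd_def by blast
  have inner: "(\<Sum>j\<in>UNIV. x i * M i j * x j) = x i * (M i a - M i b)" for i
  proof -
    have "(\<Sum>j\<in>UNIV. x i * M i j * x j) = x i * (\<Sum>j\<in>UNIV. M i j * x j)"
      by (simp add: sum_distrib_left mult.assoc)
    also have "(\<Sum>j\<in>UNIV. M i j * x j) = (\<Sum>j\<in>UNIV. (if j = a then M i j else 0) - (if j = b then M i j else 0))"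
      by (rule sum.cong) (auto simp: x_def)
    also have "\<dots> = M i a - M i b" by (simp add: sum_subtractf)
    finally show ?thesis .
  qed
  have "(\<Sum>i\<in>UNIV. \<Sum>j\<in>UNIV. x i * M i j * x j) = (\<Sum>i\<in>UNIV. (if i = a then (M i a - M i b) else 0) - (if i = b then (M i a - M i b) else 0))"
    unfolding inner by (rule sum.cong) (auto simp: x_def)
  also have "\<dots> = (M a a - M a b) - (M b a - M b b)" by (simp add: sum_subtractf)
  finally show ?thesis using q sym by linarith
qed

lemma rate_bound:
  assumes "rate_ok c r p y" "c > 0" "0 \<le> p" "y \<le> Y"
  shows "r \<le> c * max 0 Y / ln 2"
proof (cases "p = 0")
  case True
  then have "r \<le> 0" using assms(1) unfolding rate_ok_def by simp
  moreover have "0 \<le> c * max 0 Y / ln 2" using assms(2) by simp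
  ultimately show ?thesis by linarith
next
  case False
  then have pp: "p > 0" using assms(3) by simp
  have z: "0 < 1 + y / p" and r: "r \<le> c * (p * log 2 (1 + y / p))"
    using assms(1) False unfolding rate_ok_def by auto
  have "ln (1 + y / p) \<le> y / p" using ln_add_one_self_le_self2[of "y/p"] z by simp
  then have "p * ln (1 + y / p) \<le> y" using pp by (simp add: field_simps mult_left_mono)
  then have "p * log 2 (1 + y / p) \<le> y / ln 2" by (simp add: log_def divide_right_mono)
  also have "\<dots> \<le> max 0 Y / ln 2" using assms(4) by (simp add: divide_right_mono)
  finally have "c * (p * log 2 (1 + y / p)) \<le> c * (max 0 Y / ln 2)"
    using assms(2) by (simp add: mult_left_mono del: times_divide_eq_right)
  then show ?thesis using r by simp
qed

theorem mainTheorem7: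
  fixes \<Delta>0 B :: real and m v :: "real ^ 'k::finite"
  assumes "\<Delta>0 > 0" and "B > 0"
    and "\<forall>k. m $ k \<ge> 0" and "\<forall>k. v $ k \<ge> 0"
  shows "bounded (region_G \<Delta>0 B m v)"
proof -
  define c where "c = \<Delta>0 * B"
  have c: "c > 0" using assms unfolding c_def by simp
  define bd where "bd k = c * max 0 (m $ k + 1 + v $ k) / ln 2" for k
  have comp: "0 \<le> r $ k \<and> r $ k \<le> bd k" if rin: "r \<in> region_G \<Delta>0 B m v" for r k
  proof -
    obtain p y and H :: "('k + 'k) \<Rightarrow> ('k + 'k) \<Rightarrow> real" where
      r0: "\<forall>k. 0 \<le> r $ k" and ro: "\<forall>k. rate_ok c (r $ k) (p $ k) (y $ k)"
      and pb: "\<forall>k. 0 \<le> p $ k \<and> p $ k \<le> 1"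
      and hx: "\<forall>k. H (Inl k) (Inr k) = y $ k - p $ k * m $ k"
      and hv: "\<forall>k. H (Inr k) (Inr k) = v $ k"
      and hxx: "\<forall>k. H (Inl k) (Inl k) \<le> p $ k - (p $ k)\<^sup>2"
      and ps: "psd H"
      using rin unfolding region_G_def c_def mem_Collect_eq by (elim exE conjE) blast
    have "2 * H (Inl k) (Inr k) \<le> H (Inl k) (Inl k) + H (Inr k) (Inr k)"
      by (rule psd_pair[OF ps]) simp
    then have "2 * (y $ k - p $ k * m $ k) \<le> p $ k - (p $ k)\<^sup>2 + v $ k"
      using hx hv hxx by smt
    moreover have "p $ k * m $ k \<le> m $ k" using pb assms(3)
      by (metis mult_left_le_one_le mult.commute)
    moreover have "p $ k - (p $ k)\<^sup>2 \<le> 1" using pb by (smt (verit) zero_le_power2)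
    ultimately have "y $ k \<le> m $ k + 1 + v $ k" using assms(4) pb by smt
    then have "r $ k \<le> bd k" unfolding bd_def
      using rate_bound[OF ro[rule_format] c] pb by blast
    then show ?thesis using r0 by blast
  qed
  show ?thesis unfolding bounded_iff
  proof (intro exI ballI)
    fix r assume rg: "r \<in> region_G \<Delta>0 B m v"
    have "norm r \<le> (\<Sum>k\<in>UNIV. \<bar>r $ k\<bar>)" by (rule norm_le_l1_cart)
    also have "\<dots> \<le> (\<Sum>k\<in>UNIV. bd k)" using comp[OF rg] by (intro sum_mono) auto
    finally show "norm r \<le> (\<Sum>k\<in>UNIV. bd k)" .
  qed
qed

end
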